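(* Let $\mu_1,\ldots,\mu_n$ be continuous probability measures on $\mathbb{R}^n$ and $\alpha_1,\ldots,\alpha_n\in(0,1)$ such that for all $i$ and all $v\in S^{n-1}$ there is a unique $\lambda\in\mathbb{R}$ with $\mu_i(H^+_{v,\lambda})=\alpha_i$. Let $f_i:S^{n-1}\to\mathbb{R}^n$ ($i\in[n]$) be functions with $\mu_i\big(H^+_{v,\langle v,f_i(v)\rangle}\big)=\alpha_i$ for all $i$ and all $v\in S^{n-1}$. Then there is a hyperplane $H$ with $\mu_i(H^+)=\alpha_i$ for all $i\in[n]$ if and only if there exist $v\in S^{n-1}$ and a hyperplane $H$ with normal $v$ such that $f_i(v)\in H$ for all $i\in[n]$. *)

theory Defs
  imports "HOL-Probability.Probability"
begin

definition halfspace_pos :: "real ^ 'n \<Rightarrow> real \<Rightarrow> (real ^ 'n) set" where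
  "halfspace_pos v lam = {x. inner v x \<ge> lam}"

definition hyperplane :: "real ^ 'n \<Rightarrow> real \<Rightarrow> (real ^ 'n) set" where
  "hyperplane v lam = {x. inner v x = lam}"

definition cont_prob_measure :: "(real ^ 'n) measure \<Rightarrow> bool" where
  "cont_prob_measure M \<longleftrightarrow> prob_space M \<and> sets M = sets borel \<and> absolutely_continuous lborel M"

end

theory Submission
  imports Defs
begin

theorem mainTheorem2:
  fixes \<mu> :: "'n::finite \<Rightarrow> (real ^ 'n) measure"
    and \<alpha> :: "'n \<Rightarrow> real"
    and f :: "'n \<Rightarrow> real ^ 'n \<Rightarrow> real ^ 'n"
  assumes cont: "\<And>i. cont_prob_measure (\<mu> i)"
    and alpha: "\<And>i. 0 < \<alpha> i \<and> \<alpha> i < 1"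
    and uniq: "\<And>i v. norm v = 1 \<Longrightarrow> \<exists>!lam. measure (\<mu> i) (halfspace_pos v lam) = \<alpha> i"
    and fprop: "\<And>i v. norm v = 1 \<Longrightarrow> measure (\<mu> i) (halfspace_pos v (inner v (f i v))) = \<alpha> i"
  shows "(\<exists>v lam. v \<noteq> 0 \<and> (\<forall>i. measure (\<mu> i) (halfspace_pos v lam) = \<alpha> i))
     \<longleftrightarrow> (\<exists>v lam. norm v = 1 \<and> (\<forall>i. f i v \<in> hyperplane v lam))"
proof
  assume "\<exists>v lam. v \<noteq> 0 \<and> (\<forall>i. measure (\<mu> i) (halfspace_pos v lam) = \<alpha> i)"
  then obtain v lam where v0: "v \<noteq> 0" and hv: "\<And>i. measure (\<mu> i) (halfspace_pos v lam) = \<alpha> i" by blast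
  define c where "c = norm v"
  have c0: "c > 0" using v0 by (simp add: c_def)
  define u where "u = (1 / c) *\<^sub>R v"
  have nu: "norm u = 1" using c0 by (simp add: u_def c_def)
  have hs: "halfspace_pos u (lam / c) = halfspace_pos v lam"
    using c0 by (auto simp: halfspace_pos_def u_def divide_simps)
  have "\<forall>i. f i u \<in> hyperplane u (lam / c)"
  proof
    fix i
    have a: "measure (\<mu> i) (halfspace_pos u (lam / c)) = \<alpha> i" using hs hv by simp
    have b: "measure (\<mu> i) (halfspace_pos u (inner u (f i u))) = \<alpha> i" using fprop nu by blast
    have "inner u (f i u) = lam / c" using uniq[OF nu, of i] a b by blast
    then show "f i u \<in> hyperplane u (lam / c)" by (simp add: hyperplane_def)
  qed
  then show "\<exists>v lam. norm v = 1 \<and> (\<forall>i. f i v \<in> hyperplane v lam)" using nu by blast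
next
  assume "\<exists>v lam. norm v = 1 \<and> (\<forall>i. f i v \<in> hyperplane v lam)"
  then obtain v lam where nv: "norm v = 1" and h: "\<And>i. f i v \<in> hyperplane v lam" by blast
  have "\<forall>i. measure (\<mu> i) (halfspace_pos v lam) = \<alpha> i"
  proof
    fix i
    have "inner v (f i v) = lam" using h[of i] by (simp add: hyperplane_def)
    then show "measure (\<mu> i) (halfspace_pos v lam) = \<alpha> i" using fprop[OF nv, of i] by simp
  qed
  moreover have "v \<noteq> 0" using nv by auto
  ultimately show "\<exists>v lam. v \<noteq> 0 \<and> (\<forall>i. measure (\<mu> i) (halfspace_pos v lam) = \<alpha> i)" by blast
qed

end
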